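(* Let $G\le \mathrm{GL}(d)$ be a connected linear semi-simple Lie group, let $g\in G$ and let $C_g\colon G\to G$, $C_g(x)=gxg^{-1}$. Let $g=ehu$ be the multiplicative Jordan decomposition of $g$. Then the recurrent set of $C_g$ is $$\mathcal R(C_g)=G_h\cap G_u.$$ Moreover, $C_g$ restricted to $\mathcal R(C_g)$ is an isometry for some distance.
   Context: The multiplicative Jordan decomposition writes $g=ehu$ with $e$ elliptic (diagonalizable over $\mathbb C$ with eigenvalues of modulus 1), $h$ hyperbolic (diagonalizable over $\mathbb R$ with positive eigenvalues), $u$ unipotent, pairwise commuting; for $g$ in a connected linear semi-simple group, $e,h,u\in G$. For $x\in G$, $G_x=\{y\in G: xy=yx\}$ is the centralizer of $x$ in $G$. The recurrent set of a map $\phi\colon X\to X$ is $\mathcal R(\phi)=\{x\in X:\ \exists\, n_k\to\infty \text{ with } \phi^{n_k}(x)\to x\}$. *)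

theory Defs
  imports "HOL-Analysis.Analysis"
begin

text \<open>Real d x d matrices are rendered as real^'n^'n with d = CARD('n).\<close>

fun mpow :: "('a::semiring_1)^'n^'n \<Rightarrow> nat \<Rightarrow> 'a^'n^'n" where
  "mpow A 0 = mat 1"
| "mpow A (Suc k) = A ** mpow A k"

definition mexp :: "real^'n^'n \<Rightarrow> real^'n^'n" where
  "mexp X = (\<Sum>k. (1 / fact k) *\<^sub>R mpow X k)"

definition lie_bracket :: "real^'n^'n \<Rightarrow> real^'n^'n \<Rightarrow> real^'n^'n" where
  "lie_bracket X Y = X ** Y - Y ** X"

definition lie_algebra_of :: "(real^'n^'n) set \<Rightarrow> (real^'n^'n) set" where
  "lie_algebra_of G = {X. \<forall>t::real. mexp (t *\<^sub>R X) \<in> G}"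

definition lie_ideal :: "(real^'n^'n) set \<Rightarrow> (real^'n^'n) set \<Rightarrow> bool" where
  "lie_ideal L I \<longleftrightarrow> subspace I \<and> I \<subseteq> L \<and> (\<forall>X\<in>L. \<forall>Y\<in>I. lie_bracket X Y \<in> I)"

fun derived_series :: "(real^'n^'n) set \<Rightarrow> nat \<Rightarrow> (real^'n^'n) set" where
  "derived_series I 0 = I"
| "derived_series I (Suc k) =
     span {lie_bracket X Y | X Y. X \<in> derived_series I k \<and> Y \<in> derived_series I k}"

definition solvable_lie :: "(real^'n^'n) set \<Rightarrow> bool" where
  "solvable_lie I \<longleftrightarrow> (\<exists>k. derived_series I k = {0})"

definition semisimple_lie :: "(real^'n^'n) set \<Rightarrow> bool" where
  "semisimple_lie L \<longleftrightarrow> (\<forall>I. lie_ideal L I \<and> solvable_lie I \<longrightarrow> I = {0})"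

definition matrix_subgroup :: "(real^'n^'n) set \<Rightarrow> bool" where
  "matrix_subgroup G \<longleftrightarrow> G \<subseteq> {A. invertible A} \<and> mat 1 \<in> G
     \<and> (\<forall>A\<in>G. \<forall>B\<in>G. A ** B \<in> G) \<and> (\<forall>A\<in>G. matrix_inv A \<in> G)"

definition connected_semisimple_linear_group :: "(real^'n^'n) set \<Rightarrow> bool" where
  "connected_semisimple_linear_group G \<longleftrightarrow>
     matrix_subgroup G \<and> closedin (top_of_set {A. invertible A}) G \<and> connected G
     \<and> semisimple_lie (lie_algebra_of G)"

definition cmat :: "real^'n^'n \<Rightarrow> complex^'n^'n" where
  "cmat A = (\<chi> i j. complex_of_real (A $ i $ j))"

definition is_diag :: "('a::zero)^'n^'n \<Rightarrow> bool" where
  "is_diag D \<longleftrightarrow> (\<forall>i j. i \<noteq> j \<longrightarrow> D $ i $ j = 0)"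

definition elliptic :: "real^'n^'n \<Rightarrow> bool" where
  "elliptic A \<longleftrightarrow> (\<exists>P D :: complex^'n^'n. invertible P \<and> is_diag D
      \<and> (\<forall>i. cmod (D $ i $ i) = 1) \<and> cmat A ** P = P ** D)"

definition hyperbolic :: "real^'n^'n \<Rightarrow> bool" where
  "hyperbolic A \<longleftrightarrow> (\<exists>P D :: real^'n^'n. invertible P \<and> is_diag D
      \<and> (\<forall>i. D $ i $ i > 0) \<and> A ** P = P ** D)"

definition unipotent :: "real^'n^'n \<Rightarrow> bool" where
  "unipotent A \<longleftrightarrow> (\<exists>k. mpow (A - mat 1) k = 0)"

definition centralizer :: "(real^'n^'n) set \<Rightarrow> real^'n^'n \<Rightarrow> (real^'n^'n) set" where
  "centralizer G x = {y \<in> G. x ** y = y ** x}"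

definition conj_map :: "real^'n^'n \<Rightarrow> real^'n^'n \<Rightarrow> real^'n^'n" where
  "conj_map g x = g ** x ** matrix_inv g"

definition recurrent_set :: "('a::topological_space \<Rightarrow> 'a) \<Rightarrow> 'a set \<Rightarrow> 'a set" where
  "recurrent_set \<phi> X = {x \<in> X. \<exists>n :: nat \<Rightarrow> nat. filterlim n at_top sequentially
      \<and> ((\<lambda>k. (\<phi> ^^ n k) x) \<longlongrightarrow> x) sequentially}"

end

theory Submission
  imports Defs
begin


lemma mmult_add_right: "((A::'a::semiring_1^'n^'n) + B) ** C = A ** C + B ** C"
  by (vector matrix_matrix_mult_def sum.distrib[symmetric] field_simps)
lemma mmult_diff_right: "((A::'a::ring_1^'n^'n) - B) ** C = A ** C - B ** C"
  by (vector matrix_matrix_mult_def sum_subtractf[symmetric] field_simps)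
lemma mmult_diff_left: "(C::'a::ring_1^'n^'n) ** (A - B) = C ** A - C ** B"
  by (vector matrix_matrix_mult_def sum_subtractf[symmetric] field_simps)
lemma mpow_Suc2: "mpow (A::'a::semiring_1^'n^'n) (Suc n) = mpow A n ** A"
  by (induction n) (simp_all add: matrix_mul_assoc)
lemma mpow_add: "mpow (A::'a::semiring_1^'n^'n) (m + n) = mpow A m ** mpow A n"
  by (induction m) (simp_all add: matrix_mul_assoc)

definition dg :: "('n \<Rightarrow> real) \<Rightarrow> real^'n^'n" where
  "dg f = (\<chi> i j. if i = j then f i else 0)"
definition wproj :: "('n \<Rightarrow> real) \<Rightarrow> real \<Rightarrow> real^'n^'n \<Rightarrow> real^'n^'n" where
  "wproj d l y = (\<chi> i j. if d i / d j = l then y$i$j else 0)"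
definition adm :: "real^'n^'n \<Rightarrow> real^'n^'n \<Rightarrow> real^'n^'n" where
  "adm b y = b ** y - y ** b"

lemma dg_left: "(dg f ** y) $ i $ j = f i * y$i$j"
  by (simp add: matrix_matrix_mult_def dg_def if_distrib if_distribR sum.delta cong: if_cong)
lemma dg_right: "(y ** dg f) $ i $ j = y$i$j * f j"
  by (simp add: matrix_matrix_mult_def dg_def if_distrib if_distribR sum.delta' cong: if_cong)
lemma dg_entry: "dg f $ i $ j = (if i = j then f i else 0)"
  by (simp add: dg_def)
lemma dg_mult: "dg f ** dg g = dg (\<lambda>i. f i * g i)"
  by (simp add: vec_eq_iff dg_left dg_entry)
lemma dg_one: "dg (\<lambda>i. 1) = mat 1"
  by (simp add: vec_eq_iff dg_entry mat_def)
lemma mpow_dg: "mpow (dg f) n = dg (\<lambda>i. f i ^ n)"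
  by (induction n) (simp_all add: dg_one dg_mult)

lemma comm_dg_entry:
  assumes "X ** dg d = dg d ** X"
  shows "X$i$k * d k = d i * X$i$k"
proof -
  have "(X ** dg d)$i$k = (dg d ** X)$i$k" using assms by simp
  then show ?thesis by (simp add: dg_left dg_right)
qed

lemma wproj_entry: "wproj d l y $ i $ j = (if d i / d j = l then y$i$j else 0)"
  by (simp add: wproj_def)

lemma wproj_left:
  assumes "X ** dg d = dg d ** X"
  shows "wproj d l (X ** y) = X ** wproj d l y"
proof -
  have t: "X$i$k * (if d k / d j = l then y$k$j else 0) = (if d i / d j = l then X$i$k * y$k$j else 0)" for i j k
  proof (cases "X$i$k = 0")
    case False
    then have "d i = d k" using comm_dg_entry[OF assms, of i k] by (simp add: mult.commute)
    then show ?thesis by simp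
  qed simp
  have "(wproj d l (X ** y)) $ i $ j = (X ** wproj d l y) $ i $ j" for i j
    by (simp add: wproj_entry matrix_matrix_mult_def t)
  then show ?thesis by (simp add: vec_eq_iff)
qed

lemma wproj_right:
  assumes "X ** dg d = dg d ** X"
  shows "wproj d l (y ** X) = wproj d l y ** X"
proof -
  have t: "(if d i / d k = l then y$i$k else 0) * X$k$j = (if d i / d j = l then y$i$k * X$k$j else 0)" for i j k
  proof (cases "X$k$j = 0")
    case False
    then have "d k = d j" using comm_dg_entry[OF assms, of k j] by (simp add: mult.commute)
    then show ?thesis by simp
  qed simp
  have "(wproj d l (y ** X)) $ i $ j = (wproj d l y ** X) $ i $ j" for i j
    by (simp add: wproj_entry matrix_matrix_mult_def t)
  then show ?thesis by (simp add: vec_eq_iff)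
qed

lemma wproj_scale:
  shows "wproj d l (dg (\<lambda>i. d i ^ n) ** y ** dg (\<lambda>i. inverse (d i) ^ n)) = l^n *\<^sub>R wproj d l y"
proof -
  have "(wproj d l (dg (\<lambda>i. d i ^ n) ** y ** dg (\<lambda>i. inverse (d i) ^ n))) $ i $ j
     = (l^n *\<^sub>R wproj d l y) $ i $ j" for i j
  proof (cases "d i / d j = l")
    case True
    then have "l ^ n = d i ^ n * inverse (d j) ^ n"
      by (metis divide_inverse power_mult_distrib)
    then show ?thesis using True by (simp add: wproj_entry dg_left dg_right)
  qed (simp add: wproj_entry)
  then show ?thesis by (simp add: vec_eq_iff)
qed

lemma wproj_linear: "linear (wproj d l)"
  by (rule linearI) (simp_all add: vec_eq_iff wproj_entry)

lemma wproj_diff: "wproj d l (x - y) = wproj d l x - wproj d l y"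
  by (simp add: vec_eq_iff wproj_entry)

lemma wproj_one:
  assumes "y ** dg d = dg d ** y" "\<forall>i. d i > 0"
  shows "wproj d 1 y = y"
proof -
  have "wproj d 1 y $ i $ j = y $ i $ j" for i j
  proof (cases "y$i$j = 0")
    case False
    then have "d i = d j" using comm_dg_entry[OF assms(1), of i j] by (simp add: mult.commute)
    then show ?thesis using assms(2)[rule_format, of j] by (simp add: wproj_entry)
  qed (simp add: wproj_entry)
  then show ?thesis by (simp add: vec_eq_iff)
qed

lemma adm_left:
  assumes "X ** b = b ** X"
  shows "adm b (X ** y) = X ** adm b y"
  by (simp add: adm_def mmult_diff_left matrix_mul_assoc assms)

lemma adm_right:
  assumes "X ** b = b ** X"
  shows "adm b (y ** X) = adm b y ** X"
  by (simp add: adm_def mmult_diff_right matrix_mul_assoc assms)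
    (simp add: matrix_mul_assoc[symmetric] assms)

lemma adm_linear: "linear (adm b)"
  by (rule linearI) (simp_all add: adm_def matrix_add_ldistrib mmult_add_right matrix_scalar_ac scalar_matrix_assoc algebra_simps)

lemma adm_scaleR: "adm b (r *\<^sub>R y) = r *\<^sub>R adm b y"
  using linear_scale[OF adm_linear] .

lemma admp_left: "X ** b = b ** X \<Longrightarrow> (adm b ^^ m) (X ** y) = X ** (adm b ^^ m) y"
  by (induction m) (simp_all add: adm_left)
lemma admp_right: "X ** b = b ** X \<Longrightarrow> (adm b ^^ m) (y ** X) = (adm b ^^ m) y ** X"
  by (induction m) (simp_all add: adm_right)
lemma admp_scaleR: "(adm b ^^ m) (r *\<^sub>R y) = r *\<^sub>R (adm b ^^ m) y"
  by (induction m) (simp_all add: adm_scaleR)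
lemma admp_linear: "linear (adm b ^^ m)"
proof (induction m)
  case 0 show ?case by (simp add: linear_id[unfolded id_def])
next
  case (Suc m)
  show ?case unfolding funpow.simps(2) by (rule linear_compose[OF Suc.IH adm_linear])
qed

lemma adm_wproj:
  assumes "b ** dg d = dg d ** b"
  shows "adm b (wproj d l y) = wproj d l (adm b y)"
  by (simp add: adm_def wproj_diff wproj_left[OF assms] wproj_right[OF assms])
lemma admp_wproj:
  assumes "b ** dg d = dg d ** b"
  shows "(adm b ^^ m) (wproj d l y) = wproj d l ((adm b ^^ m) y)"
  by (induction m) (simp_all add: adm_wproj[OF assms])

lemma adm_nil:
  assumes nil: "mpow (b - mat 1) k = 0"
  shows "(adm b ^^ (k + k)) y = 0"
proof -
  define N where "N = b - mat 1"
  have bN: "b = N + mat 1" by (simp add: N_def)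
  have adN: "adm b z = N ** z - z ** N" for z
    by (simp add: adm_def bN matrix_add_ldistrib mmult_add_right)
  define S where "S m = {mpow N i ** y ** mpow N j | i j. i + j = m}" for m
  have "(adm b ^^ m) y \<in> span (S m)" for m
  proof (induction m)
    case 0
    have "y \<in> S 0" unfolding S_def by (rule CollectI, rule exI[of _ 0], rule exI[of _ 0]) simp
    then show ?case by (simp add: span_base)
  next
    case (Suc m)
    have "adm b ` S m \<subseteq> span (S (Suc m))"
    proof
      fix z assume "z \<in> adm b ` S m"
      then obtain i j where ij: "i + j = m" and z: "z = adm b (mpow N i ** y ** mpow N j)"
        unfolding S_def by blast
      have 1: "mpow N (Suc i) ** y ** mpow N j \<in> S (Suc m)" unfolding S_def
        by (rule CollectI, rule exI[of _ "Suc i"], rule exI[of _ j]) (simp add: ij)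
      have 2: "mpow N i ** y ** mpow N (Suc j) \<in> S (Suc m)" unfolding S_def
        by (rule CollectI, rule exI[of _ i], rule exI[of _ "Suc j"]) (simp add: ij)
      have e1: "mpow N (Suc i) = N ** mpow N i" by simp
      have e2: "mpow N (Suc j) = mpow N j ** N" by (rule mpow_Suc2)
      have "z = mpow N (Suc i) ** y ** mpow N j - mpow N i ** y ** mpow N (Suc j)"
        by (simp only: z adN e1 e2 matrix_mul_assoc)
      then show "z \<in> span (S (Suc m))" using span_diff[OF span_base[OF 1] span_base[OF 2]] by simp
    qed
    then have "span (adm b ` S m) \<subseteq> span (S (Suc m))"
      by (simp add: span_minimal subspace_span)
    then have "adm b ` span (S m) \<subseteq> span (S (Suc m))"
      using span_linear_image[OF adm_linear] by metis
    then show ?case using Suc by auto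
  qed
  moreover have "S (k + k) \<subseteq> {0}"
  proof
    fix z assume "z \<in> S (k + k)"
    then obtain i j where ij: "i + j = k + k" and z: "z = mpow N i ** y ** mpow N j"
      unfolding S_def by blast
    have N0: "mpow N (k + r) = 0" for r using nil by (simp add: mpow_add N_def)
    show "z \<in> {0}"
    proof (cases "k \<le> i")
      case True
      then obtain r where "i = k + r" using le_Suc_ex by blast
      then show ?thesis by (simp add: z N0)
    next
      case False
      then have "k \<le> j" using ij by linarith
      then obtain r where "j = k + r" using le_Suc_ex by blast
      then show ?thesis by (simp add: z N0)
    qed
  qed
  then have "span (S (k + k)) \<subseteq> {0}"
    by (metis span_empty span_insert_0 span_mono subset_singletonD)
  ultimately show ?thesis by blast
qed

lemma exists_last: "P (0::nat) \<Longrightarrow> \<not> P K \<Longrightarrow> \<exists>m. P m \<and> \<not> P (Suc m)"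
  by (induction K) auto

lemma comm_inv:
  fixes X Y Yi :: "'a::semiring_1^'n^'n"
  assumes "X ** Y = Y ** X" "Y ** Yi = mat 1" "Yi ** Y = mat 1"
  shows "X ** Yi = Yi ** X"
proof -
  have "Yi ** X = Yi ** X ** (Y ** Yi)" by (simp add: assms)
  also have "\<dots> = Yi ** (X ** Y) ** Yi" by (simp add: matrix_mul_assoc)
  also have "\<dots> = Yi ** Y ** X ** Yi" by (simp add: assms(1) matrix_mul_assoc)
  also have "\<dots> = X ** Yi" by (simp add: assms(3))
  finally show ?thesis by simp
qed

lemma mpow_comm: "(A::'a::semiring_1^'n^'n) ** B = B ** A \<Longrightarrow> mpow A n ** B = B ** mpow A n"
proof (induction n)
  case (Suc n)
  have "mpow A (Suc n) ** B = A ** (mpow A n ** B)" by (simp add: matrix_mul_assoc)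
  also have "\<dots> = A ** (B ** mpow A n)" using Suc by simp
  also have "\<dots> = B ** (A ** mpow A n)" using Suc.prems by (simp add: matrix_mul_assoc)
  finally show ?case by simp
qed simp

lemma mpow_mult: "(A::'a::semiring_1^'n^'n) ** B = B ** A \<Longrightarrow> mpow (A ** B) n = mpow A n ** mpow B n"
proof (induction n)
  case (Suc n)
  have "mpow (A ** B) (Suc n) = A ** B ** (mpow A n ** mpow B n)" using Suc by simp
  also have "\<dots> = A ** (B ** mpow A n) ** mpow B n" by (simp add: matrix_mul_assoc)
  also have "\<dots> = A ** (mpow A n ** B) ** mpow B n" by (simp only: mpow_comm[OF Suc.prems])
  finally show ?case by (simp add: matrix_mul_assoc)
qed simp

lemma mpow_inv: "(A::'a::semiring_1^'n^'n) ** A' = mat 1 \<Longrightarrow> A' ** A = mat 1 \<Longrightarrow> mpow A n ** mpow A' n = mat 1"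
proof (induction n)
  case (Suc n)
  have e1: "mpow A' (Suc n) = mpow A' n ** A'" by (rule mpow_Suc2)
  have e2: "mpow A (Suc n) = A ** mpow A n" by simp
  have "mpow A (Suc n) ** mpow A' (Suc n) = A ** mpow A n ** (mpow A' n ** A')"
    by (simp only: e1 e2)
  also have "\<dots> = A ** (mpow A n ** mpow A' n) ** A'" by (simp only: matrix_mul_assoc)
  finally show ?case using Suc by simp
qed simp


lemma norm_nth_le': "norm ((x::'a::real_normed_vector^'n) $ i) \<le> norm x"
  unfolding norm_vec_def by (rule member_le_L2_set) simp_all
lemma norm_mmult_le:
  fixes A B :: "'a::real_normed_algebra_1^'n^'n"
  shows "norm (A ** B) \<le> real CARD('n)^3 * norm A * norm B"
proof -
  have e: "norm ((A ** B) $ i $ j) \<le> real CARD('n) * norm A * norm B" for i j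
  proof -
    have "(A ** B) $ i $ j = (\<Sum>k\<in>UNIV. A$i$k * B$k$j)"
      unfolding matrix_matrix_mult_def by simp
    then have "norm ((A ** B) $ i $ j) = norm (\<Sum>k\<in>UNIV. A$i$k * B$k$j)"
      by simp
    also have "\<dots> \<le> (\<Sum>k\<in>UNIV. norm (A$i$k * B$k$j))"
      by (rule norm_sum)
    also have "\<dots> \<le> (\<Sum>k\<in>UNIV. norm (A$i$k) * norm (B$k$j))"
      by (rule sum_mono) (rule norm_mult_ineq)
    also have "\<dots> \<le> (\<Sum>k\<in>(UNIV::'n set). norm A * norm B)"
    proof (rule sum_mono)
      fix k
      have "norm (A$i$k) \<le> norm A" using norm_nth_le'[of "A$i" k] norm_nth_le'[of A i] by linarith
      moreover have "norm (B$k$j) \<le> norm B" using norm_nth_le'[of "B$k" j] norm_nth_le'[of B k] by linarith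
      ultimately show "norm (A$i$k) * norm (B$k$j) \<le> norm A * norm B"
        by (simp add: mult_mono)
    qed
    also have "\<dots> = real CARD('n) * norm A * norm B" by simp
    finally show ?thesis .
  qed
  have r: "norm ((A ** B) $ i) \<le> real CARD('n)^2 * norm A * norm B" for i
  proof -
    have "norm ((A ** B) $ i) \<le> (\<Sum>j\<in>UNIV. norm ((A ** B) $ i $ j))"
      unfolding norm_vec_def by (rule L2_set_le_sum) simp
    also have "\<dots> \<le> (\<Sum>j\<in>(UNIV::'n set). real CARD('n) * norm A * norm B)"
      by (rule sum_mono) (rule e)
    also have "\<dots> = real CARD('n)^2 * norm A * norm B" by (simp add: power2_eq_square)
    finally show ?thesis .
  qed
  have "norm (A ** B) \<le> (\<Sum>i\<in>UNIV. norm ((A ** B) $ i))"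
    unfolding norm_vec_def by (rule L2_set_le_sum) simp
  also have "\<dots> \<le> (\<Sum>i\<in>(UNIV::'n set). real CARD('n)^2 * norm A * norm B)"
    by (rule sum_mono) (rule r)
  also have "\<dots> = real CARD('n)^3 * norm A * norm B" by (simp add: power3_eq_cube power2_eq_square)
  finally show ?thesis .
qed

lemma norm_mmult_le': "norm ((a::real^'n^'n) ** (b::real^'n^'n)) \<le> norm a * norm b * real CARD('n)^3"
  using norm_mmult_le[of a b] by (simp add: mult_ac)

lemma bb_mmult: "bounded_bilinear ((**) :: real^'n^'n \<Rightarrow> real^'n^'n \<Rightarrow> real^'n^'n)"
proof
  fix a a' b b' :: "real^'n^'n" and r :: real
  show "(a + a') ** b = a ** b + a' ** b" by (rule mmult_add_right)
  show "a ** (b + b') = a ** b + a ** b'" by (rule matrix_add_ldistrib)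
  show "(r *\<^sub>R a) ** b = r *\<^sub>R (a ** b)" by (simp add: scalar_matrix_assoc)
  show "a ** (r *\<^sub>R b) = r *\<^sub>R (a ** b)" by (simp add: matrix_scalar_ac scalar_matrix_assoc)
next
  show "\<exists>K. \<forall>(a::real^'n^'n) (b::real^'n^'n). norm (a ** b) \<le> norm a * norm b * K"
    by (rule exI[of _ "real CARD('n)^3"]) (intro allI, rule norm_mmult_le')
qed



lemma norm_le_entries:
  fixes M :: "'a::real_normed_vector^'n^'m"
  shows "norm M \<le> (\<Sum>i\<in>UNIV. \<Sum>j\<in>UNIV. norm (M$i$j))"
proof -
  have "norm M \<le> (\<Sum>i\<in>UNIV. norm (M $ i))"
    unfolding norm_vec_def by (rule L2_set_le_sum) simp
  also have "\<dots> \<le> (\<Sum>i\<in>UNIV. \<Sum>j\<in>UNIV. norm (M$i$j))"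
  proof (rule sum_mono)
    fix i show "norm (M $ i) \<le> (\<Sum>j\<in>UNIV. norm (M$i$j))"
      unfolding norm_vec_def[of "M$i"] by (rule L2_set_le_sum) simp
  qed
  finally show ?thesis .
qed

lemma entry_le_norm: "norm ((M::'a::real_normed_vector^'n^'m)$i$j) \<le> norm M"
  using norm_nth_le'[of "M$i" j] norm_nth_le'[of M i] by linarith

lemma matrix_inv_props:
  fixes A :: "'a::semiring_1^'n^'n"
  assumes "invertible A"
  shows "A ** matrix_inv A = mat 1" "matrix_inv A ** A = mat 1"
proof -
  have "\<exists>A'. A ** A' = mat 1 \<and> A' ** A = mat 1" using assms unfolding invertible_def by blast
  from someI_ex[OF this] show "A ** matrix_inv A = mat 1" "matrix_inv A ** A = mat 1"
    unfolding matrix_inv_def by auto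
qed

lemma cmat_mult: "cmat (A ** B) = cmat A ** cmat B"
  by (simp add: cmat_def matrix_matrix_mult_def vec_eq_iff)

lemma cmat_one: "cmat (mat 1) = mat 1"
  by (simp add: cmat_def mat_def vec_eq_iff)

lemma cmat_mpow: "cmat (mpow A n) = mpow (cmat A) n"
  by (induction n) (simp_all add: cmat_mult cmat_one)

lemma mpow_intertw: "(A::'a::semiring_1^'n^'n) ** Q = Q ** D \<Longrightarrow> mpow A n ** Q = Q ** mpow D n"
proof (induction n)
  case (Suc n)
  have "mpow A (Suc n) ** Q = A ** (mpow A n ** Q)" by (simp add: matrix_mul_assoc)
  also have "\<dots> = A ** (Q ** mpow D n)" using Suc by simp
  also have "\<dots> = (A ** Q) ** mpow D n" by (simp add: matrix_mul_assoc)
  also have "\<dots> = Q ** (D ** mpow D n)" using Suc.prems by (simp add: matrix_mul_assoc)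
  finally show ?case by simp
qed simp

lemma mpow_diag:
  assumes "is_diag (D::'a::comm_semiring_1^'n^'n)"
  shows "mpow D n = (\<chi> i j. if i = j then (D$i$i)^n else 0)"
proof (induction n)
  case 0 show ?case by (simp add: mat_def vec_eq_iff)
next
  case (Suc n)
  have ent: "(D ** (\<chi> i j. if i = j then (D$i$i)^n else 0)) $ i $ j = (if i = j then (D$i$i)^Suc n else 0)" for i j
  proof -
    have "(D ** (\<chi> i j. if i = j then (D$i$i)^n else 0)) $ i $ j
        = (\<Sum>k\<in>UNIV. D$i$k * (if k = j then (D$k$k)^n else 0))"
      by (simp add: matrix_matrix_mult_def)
    also have "\<dots> = D$i$j * (D$j$j)^n"
      by (simp add: if_distrib sum.delta' cong: if_cong)
    also have "\<dots> = (if i = j then (D$i$i)^Suc n else 0)"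
      using assms unfolding is_diag_def by auto
    finally show ?thesis .
  qed
  have "mpow D (Suc n) = D ** (\<chi> i j. if i = j then (D$i$i)^n else 0)" using Suc.IH by simp
  also have "\<dots> = (\<chi> i j. if i = j then (D$i$i)^Suc n else 0)" by (simp add: vec_eq_iff ent)
  finally show ?case .
qed

lemma ell_bound:
  fixes e :: "real^'n^'n"
  assumes "elliptic e"
  shows "\<exists>B. \<forall>n. norm (mpow e n) \<le> B"
proof -
  obtain P D :: "complex^'n^'n" where P: "invertible P" and D: "is_diag D"
    and D1: "\<And>i. cmod (D $ i $ i) = 1" and eq: "cmat e ** P = P ** D"
    using assms unfolding elliptic_def by blast
  let ?P' = "matrix_inv P"
  note Pi = matrix_inv_props[OF P]
  let ?K = "real CARD('n)"
  have bD: "norm (mpow D n) \<le> ?K * ?K" for n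
  proof -
    have "norm (mpow D n) \<le> (\<Sum>i\<in>(UNIV::'n set). \<Sum>j\<in>(UNIV::'n set). 1)"
      by (rule order_trans[OF norm_le_entries]) (intro sum_mono, simp add: mpow_diag[OF D] norm_power D1)
    then show ?thesis by simp
  qed
  have ce: "mpow (cmat e) n = P ** mpow D n ** ?P'" for n
  proof -
    have "mpow (cmat e) n = mpow (cmat e) n ** P ** ?P'" by (simp add: Pi matrix_mul_assoc[symmetric])
    also have "\<dots> = P ** mpow D n ** ?P'" using mpow_intertw[OF eq] by simp
    finally show ?thesis .
  qed
  let ?C = "?K^3 * (?K^3 * norm P * (?K * ?K)) * norm ?P'"
  have bc: "norm (mpow (cmat e) n) \<le> ?C" for n
  proof -
    have h: "norm (P ** mpow D n) \<le> ?K^3 * norm P * (?K * ?K)"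
      by (rule order_trans[OF norm_mmult_le]) (simp add: bD mult_left_mono)
    have "norm (P ** mpow D n ** ?P') \<le> ?K^3 * norm (P ** mpow D n) * norm ?P'"
      by (rule norm_mmult_le)
    also have "\<dots> \<le> ?K^3 * (?K^3 * norm P * (?K * ?K)) * norm ?P'"
      using h by (intro mult_right_mono mult_left_mono) auto
    finally show ?thesis using ce by simp
  qed
  have "norm (mpow e n) \<le> ?K * ?K * ?C" for n
  proof -
    have "norm (mpow e n) \<le> (\<Sum>i\<in>(UNIV::'n set). \<Sum>j\<in>(UNIV::'n set). ?C)"
    proof (rule order_trans[OF norm_le_entries], intro sum_mono)
      fix i j
      have "norm (mpow e n $ i $ j) = norm (cmat (mpow e n) $ i $ j)"
        by (simp add: cmat_def)
      also have "\<dots> \<le> ?C" using entry_le_norm[of "cmat (mpow e n)" i j] bc[of n]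
        by (simp add: cmat_mpow)
      finally show "norm (mpow e n $ i $ j) \<le> ?C" .
    qed
    then show ?thesis by simp
  qed
  then show ?thesis by blast
qed

lemma ell_inv:
  fixes e :: "real^'n^'n"
  assumes "elliptic e" "invertible e"
  shows "elliptic (matrix_inv e)"
proof -
  obtain P D :: "complex^'n^'n" where P: "invertible P" and D: "is_diag D"
    and D1: "\<And>i. cmod (D $ i $ i) = 1" and eq: "cmat e ** P = P ** D"
    using assms unfolding elliptic_def by blast
  define Di :: "complex^'n^'n" where "Di = (\<chi> i j. if i = j then inverse (D$i$i) else 0)"
  have Dnz: "D$i$i \<noteq> 0" for i using D1[of i] by auto
  have DDi: "D ** Di = mat 1"
  proof -
    have "(D ** Di) $ i $ j = mat 1 $ i $ j" for i j
    proof -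
      have "(D ** Di) $ i $ j = (\<Sum>k\<in>UNIV. D$i$k * (if k = j then inverse (D$k$k) else 0))"
        by (simp add: matrix_matrix_mult_def Di_def)
      also have "\<dots> = D$i$j * inverse (D$j$j)"
        by (simp add: if_distrib sum.delta' cong: if_cong)
      also have "\<dots> = mat 1 $ i $ j"
        using D Dnz unfolding is_diag_def mat_def by auto
      finally show ?thesis .
    qed
    then show ?thesis by (simp add: vec_eq_iff)
  qed
  note ei = matrix_inv_props[OF assms(2)]
  have ce: "cmat (matrix_inv e) ** cmat e = mat 1" by (simp add: cmat_mult[symmetric] ei cmat_one)
  have "cmat (matrix_inv e) ** P = cmat (matrix_inv e) ** (P ** D ** Di)"
    by (simp add: DDi matrix_mul_assoc[symmetric])
  also have "\<dots> = cmat (matrix_inv e) ** cmat e ** P ** Di"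
    by (simp add: eq[symmetric] matrix_mul_assoc)
  also have "\<dots> = P ** Di" by (simp add: ce)
  finally have eq2: "cmat (matrix_inv e) ** P = P ** Di" .
  show ?thesis unfolding elliptic_def
  proof (intro exI conjI)
    show "is_diag Di" by (simp add: is_diag_def Di_def)
    show "\<forall>i. cmod (Di $ i $ i) = 1" by (simp add: Di_def norm_inverse D1)
  qed (fact P, fact eq2)
qed
lemma ell_recur:
  fixes e :: "real^'n^'n"
  assumes ell: "elliptic e" and inv: "invertible e"
  shows "\<exists>n::nat\<Rightarrow>nat. filterlim n at_top sequentially \<and> ((\<lambda>k. mpow e (n k)) \<longlongrightarrow> mat 1) sequentially
     \<and> ((\<lambda>k. mpow (matrix_inv e) (n k)) \<longlongrightarrow> mat 1) sequentially"
proof -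
  let ?ie = "matrix_inv e"
  note ei = matrix_inv_props[OF inv]
  obtain B1 where B1: "\<And>n. norm (mpow e n) \<le> B1" using ell_bound[OF ell] by blast
  obtain B2 where B2: "\<And>n. norm (mpow ?ie n) \<le> B2" using ell_bound[OF ell_inv[OF ell inv]] by blast
  define C where "C = real CARD('n)^3 * B2"
  have "0 \<le> B2" using B2[of 0] norm_ge_zero[of "mpow ?ie 0"] by linarith
  then have C0: "0 \<le> C" unfolding C_def by simp
  have iee: "mpow ?ie a ** mpow e a = mat 1" for a using mpow_inv[OF ei(2) ei(1)] .
  have eie: "mpow e a ** mpow ?ie a = mat 1" for a using mpow_inv[OF ei(1) ei(2)] .
  have key: "\<exists>n\<ge>N. norm (mpow e n - mat 1) < \<epsilon> \<and> norm (mpow ?ie n - mat 1) < \<epsilon>"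
    if eps: "\<epsilon> > 0" for \<epsilon> :: real and N :: nat
  proof -
    define s where "s j = mpow e (Suc N * j)" for j
    have "\<forall>j. s j \<in> cball 0 B1" using B1 by (simp add: s_def)
    with compact_imp_seq_compact[OF compact_cball] obtain l r where
      r: "strict_mono r" and lim: "(s \<circ> r) \<longlonglongrightarrow> l"
      unfolding seq_compact_def by blast
    define \<delta> where "\<delta> = \<epsilon> / ((1 + C) * (1 + C))"
    have d0: "\<delta> > 0" using eps C0 by (simp add: \<delta>_def)
    from LIMSEQ_imp_Cauchy[OF lim] d0 obtain M where
      M: "\<And>m n. m \<ge> M \<Longrightarrow> n \<ge> M \<Longrightarrow> norm ((s \<circ> r) m - (s \<circ> r) n) < \<delta>"
      unfolding Cauchy_def dist_norm by blast
    define a where "a = Suc N * r M"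
    define b where "b = Suc N * r (Suc M)"
    define n where "n = Suc N * (r (Suc M) - r M)"
    have rlt: "r M < r (Suc M)" using r by (simp add: strict_mono_def)
    have "Suc N * r M \<le> Suc N * r (Suc M)" using rlt by (intro mult_le_mono2) simp
    then have ban: "b = a + n" unfolding a_def b_def n_def by (simp add: diff_mult_distrib2)
    have "r (Suc M) - r M \<ge> 1" using rlt by simp
    then have "n \<ge> Suc N * 1" unfolding n_def by (rule mult_le_mono2)
    then have nN: "n \<ge> N" by simp
    have dist: "norm (mpow e b - mpow e a) < \<delta>"
      using M[of "Suc M" M] by (simp add: s_def a_def b_def)
    have "mpow ?ie a ** (mpow e b - mpow e a) = mpow e n - mat 1"
      by (simp add: ban mpow_add mmult_diff_left matrix_mul_assoc iee)
    then have "norm (mpow e n - mat 1) \<le> real CARD('n)^3 * norm (mpow ?ie a) * norm (mpow e b - mpow e a)"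
      by (metis norm_mmult_le)
    also have "\<dots> \<le> C * norm (mpow e b - mpow e a)"
      unfolding C_def by (intro mult_right_mono mult_left_mono B2) auto
    also have "\<dots> \<le> C * \<delta>" using dist C0 by (simp add: mult_left_mono)
    finally have n1: "norm (mpow e n - mat 1) \<le> C * \<delta>" .
    have "mpow ?ie n ** (mpow e n - mat 1) = - (mpow ?ie n - mat 1)"
      by (simp add: mmult_diff_left iee)
    then have "norm (mpow ?ie n - mat 1) \<le> real CARD('n)^3 * norm (mpow ?ie n) * norm (mpow e n - mat 1)"
      by (metis norm_mmult_le norm_minus_cancel)
    also have "\<dots> \<le> C * norm (mpow e n - mat 1)"
      unfolding C_def by (intro mult_right_mono mult_left_mono B2) auto
    also have "\<dots> \<le> C * (C * \<delta>)" using n1 C0 by (simp add: mult_left_mono)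
    finally have n2: "norm (mpow ?ie n - mat 1) \<le> C * (C * \<delta>)" .
    have "C * \<delta> < \<epsilon>" and "C * (C * \<delta>) < \<epsilon>"
    proof -
      have q: "(1 + C) * (1 + C) = 1 + 2 * C + C * C" by (simp add: algebra_simps)
      have "0 \<le> C * C" using C0 by simp
      then have l1: "C < (1 + C) * (1 + C)" and l2: "C * C < (1 + C) * (1 + C)" using C0 unfolding q by linarith+
      have e: "(1 + C) * (1 + C) * \<delta> = \<epsilon>" unfolding \<delta>_def using C0 by simp
      show "C * \<delta> < \<epsilon>" using mult_strict_right_mono[OF l1 d0] e by simp
      show "C * (C * \<delta>) < \<epsilon>" using mult_strict_right_mono[OF l2 d0] e by (simp add: mult.assoc)
    qed
    then show ?thesis using n1 n2 nN by force
  qed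
  have "\<forall>k. \<exists>n\<ge>k. norm (mpow e n - mat 1) < 1 / real (Suc k) \<and> norm (mpow ?ie n - mat 1) < 1 / real (Suc k)"
    using key by simp
  then obtain f where f: "\<And>k. f k \<ge> k" "\<And>k. norm (mpow e (f k) - mat 1) < 1 / real (Suc k)"
    "\<And>k. norm (mpow ?ie (f k) - mat 1) < 1 / real (Suc k)"
    by metis
  have "filterlim f at_top sequentially"
    unfolding filterlim_at_top eventually_sequentially using f(1) le_trans by blast
  moreover have "((\<lambda>k. mpow e (f k)) \<longlongrightarrow> mat 1) sequentially"
    using LIMSEQ_norm_0[of "\<lambda>k. mpow e (f k) - mat 1"] f(2) by (simp add: LIM_zero_iff)
  moreover have "((\<lambda>k. mpow ?ie (f k)) \<longlongrightarrow> mat 1) sequentially"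
    using LIMSEQ_norm_0[of "\<lambda>k. mpow ?ie (f k) - mat 1"] f(3) by (simp add: LIM_zero_iff)
  ultimately show ?thesis by blast
qed



lemma sandwich_bound:
  fixes U V M :: "real^'n^'n"
  assumes "norm U \<le> B" "norm V \<le> B"
  shows "norm (U ** M ** V) \<le> (real CARD('n)^3 * real CARD('n)^3 * B * B) * norm M"
proof -
  let ?K = "real CARD('n)^3"
  have B0: "0 \<le> B" using assms(1) norm_ge_zero order_trans by blast
  have "norm (U ** M ** V) \<le> ?K * norm (U ** M) * norm V" by (rule norm_mmult_le)
  also have "\<dots> \<le> ?K * (?K * norm U * norm M) * B"
    by (intro mult_mono mult_left_mono norm_mmult_le assms) auto
  also have "\<dots> \<le> ?K * (?K * B * norm M) * B"
    by (intro mult_mono mult_left_mono mult_right_mono assms B0) auto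
  finally show ?thesis by (simp add: algebra_simps)
qed

lemma scal_mid: "(X::real^'n^'n) ** (r *\<^sub>R M) ** Y = r *\<^sub>R (X ** M ** Y)"
  by (simp add: matrix_scalar_ac scalar_matrix_assoc)

lemma admp_sandwich:
  assumes "X ** b = b ** X" "Y ** b = b ** Y"
  shows "(adm b ^^ m) (X ** M ** Y) = X ** (adm b ^^ m) M ** Y"
  by (simp add: admp_right[OF assms(2)] admp_left[OF assms(1)])

lemma pow_unbounded:
  fixes l c K :: real and nk :: "nat \<Rightarrow> nat"
  assumes l: "l > 1" and c: "c > 0" and nk: "filterlim nk at_top sequentially"
  shows "\<exists>j. l ^ (nk j) * c > K"
proof -
  obtain N :: nat where N: "K / (c * (l - 1)) < real N" using reals_Archimedean2 by blast
  from nk have "eventually (\<lambda>j. N \<le> nk j) sequentially" unfolding filterlim_at_top by blast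
  then obtain j where j: "N \<le> nk j" unfolding eventually_sequentially by blast
  have cl: "c * (l - 1) > 0" using l c by simp
  have "K < real N * (c * (l - 1))" using N cl by (simp add: pos_divide_less_eq)
  also have "\<dots> \<le> real (nk j) * (c * (l - 1))" using j cl by (intro mult_right_mono) auto
  also have "\<dots> < (1 + real (nk j) * (l - 1)) * c" using c by (simp add: algebra_simps)
  also have "\<dots> \<le> l ^ (nk j) * c"
    using Bernoulli_inequality[of "l - 1" "nk j"] l c by (intro mult_right_mono) auto
  finally show ?thesis by blast
qed

lemma nk_large:
  assumes "filterlim (nk :: nat \<Rightarrow> nat) at_top sequentially"
  shows "\<exists>j. N \<le> nk j"
proof -
  from assms have "eventually (\<lambda>j. N \<le> nk j) sequentially" unfolding filterlim_at_top by blast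
  then show ?thesis unfolding eventually_sequentially by blast
qed

lemma core:
  fixes a ai b bi c ci y :: "real^'n^'n" and d :: "'n \<Rightarrow> real" and nk :: "nat \<Rightarrow> nat"
    and B :: real and k :: nat
  assumes dpos: "\<forall>i. d i > 0"
  and aai: "a ** ai = mat 1" "ai ** a = mat 1"
  and bbi: "b ** bi = mat 1" "bi ** b = mat 1"
  and cdef: "c = a ** dg d ** b" and cci: "ci ** c = mat 1"
  and cad: "a ** dg d = dg d ** a" and cbd: "b ** dg d = dg d ** b" and cab: "a ** b = b ** a"
  and Ba: "\<And>n. norm (mpow a n) \<le> B" and Bai: "\<And>n. norm (mpow ai n) \<le> B"
  and nil: "mpow (b - mat 1) k = 0"
  and nk: "filterlim nk at_top sequentially"
  and lim: "((\<lambda>j. mpow c (nk j) ** y ** mpow ci (nk j)) \<longlongrightarrow> y) sequentially"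
  shows "dg d ** y = y ** dg d \<and> b ** y = y ** b"
proof -
  define A where "A n = mpow a n" for n
  define Ai where "Ai n = mpow ai n" for n
  define Bn where "Bn n = mpow b n" for n
  define Bi where "Bi n = mpow bi n" for n
  define Dn where "Dn n = dg (\<lambda>i. d i ^ n)" for n
  define Di where "Di n = dg (\<lambda>i. inverse (d i) ^ n)" for n
  define T where "T n = mpow c n ** y ** mpow ci n" for n
  define \<beta> where "\<beta> = real CARD('n)^3 * real CARD('n)^3 * B * B"
  have caid: "ai ** dg d = dg d ** ai" using comm_inv[OF cad[symmetric] aai] by simp
  have cbid: "bi ** dg d = dg d ** bi" using comm_inv[OF cbd[symmetric] bbi] by simp
  have caib: "ai ** b = b ** ai" using comm_inv[OF cab[symmetric] aai] by simp
  have cbib: "bi ** b = b ** bi" using bbi by simp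
  have cci2: "c ** ci = mat 1" using cci matrix_left_right_inverse by blast
  have cA: "A n ** dg d = dg d ** A n" for n unfolding A_def by (rule mpow_comm[OF cad])
  have cAi: "Ai n ** dg d = dg d ** Ai n" for n unfolding Ai_def by (rule mpow_comm[OF caid])
  have cB: "Bn n ** dg d = dg d ** Bn n" for n unfolding Bn_def by (rule mpow_comm[OF cbd])
  have cBi: "Bi n ** dg d = dg d ** Bi n" for n unfolding Bi_def by (rule mpow_comm[OF cbid])
  have cAb: "A n ** b = b ** A n" for n unfolding A_def by (rule mpow_comm[OF cab])
  have cAib: "Ai n ** b = b ** Ai n" for n unfolding Ai_def by (rule mpow_comm[OF caib])
  have cBb: "Bn n ** b = b ** Bn n" for n unfolding Bn_def by (rule mpow_comm) simp
  have cBib: "Bi n ** b = b ** Bi n" for n unfolding Bi_def by (rule mpow_comm[OF cbib])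
  have DDi: "Dn n ** Di n = mat 1" for n
  proof -
    have "d i ^ n * inverse (d i) ^ n = 1" for i
      using dpos[rule_format, of i] by (simp add: power_mult_distrib[symmetric])
    then show ?thesis by (simp add: Dn_def Di_def dg_mult dg_one)
  qed
  have cpow: "mpow c n = A n ** Dn n ** Bn n" for n
  proof -
    have "(a ** dg d) ** b = b ** (a ** dg d)"
      by (metis cab cbd matrix_mul_assoc)
    then have "mpow c n = mpow (a ** dg d) n ** mpow b n" unfolding cdef by (rule mpow_mult)
    also have "mpow (a ** dg d) n = mpow a n ** mpow (dg d) n" by (rule mpow_mult[OF cad])
    finally show ?thesis by (simp add: A_def Bn_def Dn_def mpow_dg)
  qed
  have cipow: "mpow ci n = Bi n ** Di n ** Ai n" for n
  proof -
    have z: "mpow ci n ** mpow c n = mat 1" by (rule mpow_inv[OF cci cci2])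
    have "mpow c n ** (Bi n ** Di n ** Ai n) = A n ** Dn n ** (Bn n ** Bi n) ** Di n ** Ai n"
      by (simp add: cpow matrix_mul_assoc)
    also have "\<dots> = mat 1"
      by (simp add: Bn_def Bi_def mpow_inv[OF bbi] DDi[unfolded matrix_mul_assoc] A_def Ai_def mpow_inv[OF aai]
          matrix_mul_assoc[symmetric])
    finally have x: "mpow c n ** (Bi n ** Di n ** Ai n) = mat 1" .
    have "mpow ci n = mpow ci n ** (mpow c n ** (Bi n ** Di n ** Ai n))" by (simp add: x)
    also have "\<dots> = Bi n ** Di n ** Ai n" by (simp add: matrix_mul_assoc z)
    finally show ?thesis .
  qed
  have Tform: "T n = A n ** (Dn n ** (Bn n ** y ** Bi n) ** Di n) ** Ai n" for n
    by (simp add: T_def cpow cipow matrix_mul_assoc)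
  have F: "(adm b ^^ m) (wproj d l (T n)) = l^n *\<^sub>R (A n ** (Bn n ** (adm b ^^ m) (wproj d l y) ** Bi n) ** Ai n)"
    for m l n
  proof -
    have "wproj d l (T n) = A n ** wproj d l (Dn n ** (Bn n ** y ** Bi n) ** Di n) ** Ai n"
      unfolding Tform by (simp only: wproj_left[OF cA] wproj_right[OF cAi])
    also have "wproj d l (Dn n ** (Bn n ** y ** Bi n) ** Di n) = l^n *\<^sub>R (Bn n ** wproj d l y ** Bi n)"
      unfolding Dn_def Di_def wproj_scale by (simp only: wproj_left[OF cB] wproj_right[OF cBi])
    finally have "wproj d l (T n) = l^n *\<^sub>R (A n ** (Bn n ** wproj d l y ** Bi n) ** Ai n)"
      by (simp only: scal_mid)
    then show ?thesis
      by (simp only: admp_scaleR admp_sandwich[OF cAb cAib] admp_sandwich[OF cBb cBib])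
  qed
  have Qlim: "((\<lambda>j. (adm b ^^ m) (wproj d l (T (nk j)))) \<longlongrightarrow> (adm b ^^ m) (wproj d l y)) sequentially" for m l
  proof -
    have "linear ((adm b ^^ m) \<circ> wproj d l)" by (rule linear_compose[OF wproj_linear admp_linear])
    then have "bounded_linear ((adm b ^^ m) \<circ> wproj d l)" using linear_conv_bounded_linear by blast
    from bounded_linear.tendsto[OF this lim[folded T_def]] show ?thesis by simp
  qed
  have nb1: "norm (A n ** M ** Ai n) \<le> \<beta> * norm M" for n M
    unfolding \<beta>_def A_def Ai_def by (rule sandwich_bound[OF Ba Bai])
  have nb2: "norm M \<le> \<beta> * norm (A n ** M ** Ai n)" for n M
  proof -
    have "Ai n ** (A n ** M ** Ai n) ** A n = (Ai n ** A n) ** M ** (Ai n ** A n)"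
      by (simp only: matrix_mul_assoc)
    then have "Ai n ** (A n ** M ** Ai n) ** A n = M"
      using mpow_inv[OF aai(2) aai(1)] by (simp add: A_def Ai_def)
    then show ?thesis
      using sandwich_bound[OF Bai Ba, of n "A n ** M ** Ai n" n] unfolding \<beta>_def A_def Ai_def by simp
  qed
  have step1: "y$i$j = 0" if dij: "d i \<noteq> d j" for i j
  proof (rule ccontr)
    assume yne: "y$i$j \<noteq> 0"
    define l where "l = d i / d j"
    have l0: "l > 0" using dpos unfolding l_def by simp
    have l1: "l \<noteq> 1" using dij dpos[rule_format, of j] unfolding l_def by simp
    define v where "v = wproj d l y"
    have "v $ i $ j \<noteq> 0" using yne by (simp add: v_def wproj_entry l_def)
    then have "(adm b ^^ 0) v \<noteq> 0" by auto
    moreover have "\<not> (adm b ^^ (k + k)) v \<noteq> 0" using adm_nil[OF nil] by simp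
    ultimately obtain m where m1: "(adm b ^^ m) v \<noteq> 0" and m2: "(adm b ^^ Suc m) v = 0"
      using exists_last[of "\<lambda>m. (adm b ^^ m) v \<noteq> 0" "k + k"] by auto
    define w where "w = (adm b ^^ m) v"
    have "adm b w = 0" using m2 by (simp add: w_def)
    then have bw: "b ** w = w ** b" by (simp add: adm_def)
    have Bw: "Bn n ** w ** Bi n = w" for n
    proof -
      have "Bn n ** w = w ** Bn n" unfolding Bn_def by (rule mpow_comm[OF bw])
      then have "Bn n ** w ** Bi n = w ** (Bn n ** Bi n)" by (simp add: matrix_mul_assoc)
      then show ?thesis by (simp add: Bn_def Bi_def mpow_inv[OF bbi])
    qed
    define f where "f j = l ^ (nk j) *\<^sub>R (A (nk j) ** w ** Ai (nk j))" for j
    have flim: "f \<longlonglongrightarrow> w"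
      using Qlim[of m l] unfolding F by (simp add: f_def[abs_def] Bw v_def[symmetric] w_def[symmetric])
    have wpos: "norm w > 0" using m1 w_def by simp
    have bpos: "\<beta> > 0"
    proof -
      have "0 \<le> B" using Ba[of 0] norm_ge_zero order_trans by blast
      then have "\<beta> \<ge> 0" unfolding \<beta>_def by simp
      moreover have "\<beta> \<noteq> 0" using nb2[of w 0] wpos by auto
      ultimately show ?thesis by simp
    qed
    have nf: "norm (f j) = l ^ (nk j) * norm (A (nk j) ** w ** Ai (nk j))" for j
      using l0 by (simp add: f_def)
    show False
    proof (cases "l > 1")
      case True
      obtain K where K: "\<And>j. norm (f j) \<le> K"
        using convergent_imp_Bseq[of f] flim unfolding convergent_def Bseq_def by blast
      obtain j where j: "l ^ (nk j) * (norm w / \<beta>) > K"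
        using pow_unbounded[OF True _ nk, of "norm w / \<beta>" K] wpos bpos by auto
      have "norm w / \<beta> \<le> norm (A (nk j) ** w ** Ai (nk j))"
        using nb2[of w "nk j"] bpos by (simp add: divide_le_eq mult.commute)
      then have "l ^ (nk j) * (norm w / \<beta>) \<le> norm (f j)"
        unfolding nf using l0 by (intro mult_left_mono) auto
      then show False using K[of j] j by simp
    next
      case False
      then have ll: "l < 1" using l1 by simp
      have "(\<lambda>j. l ^ (nk j)) \<longlonglongrightarrow> 0"
        using filterlim_compose[OF LIMSEQ_power_zero[of l] nk] l0 ll by simp
      then have g0: "(\<lambda>j. l ^ (nk j) * (\<beta> * norm w)) \<longlonglongrightarrow> 0"
        by (rule tendsto_mult_left_zero)
      have "eventually (\<lambda>j. norm (f j) \<le> l ^ (nk j) * (\<beta> * norm w)) sequentially"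
        unfolding nf using nb1 l0 by (intro always_eventually allI mult_left_mono) auto
      from Lim_null_comparison[OF this g0] have "f \<longlonglongrightarrow> 0" .
      with flim have "w = 0" using LIMSEQ_unique by blast
      then show False using wpos by simp
    qed
  qed
  have yD: "dg d ** y = y ** dg d"
  proof -
    have "(dg d ** y) $ i $ j = (y ** dg d) $ i $ j" for i j
      using step1[of i j] by (cases "d i = d j") (simp_all add: dg_left dg_right)
    then show ?thesis by (simp add: vec_eq_iff)
  qed
  have step2: "b ** y = y ** b"
  proof (rule ccontr)
    assume "b ** y \<noteq> y ** b"
    then have "(adm b ^^ 0) (adm b y) \<noteq> 0" by (simp add: adm_def)
    moreover have "\<not> (adm b ^^ (k + k)) (adm b y) \<noteq> 0" using adm_nil[OF nil] by simp
    ultimately obtain m where m1: "(adm b ^^ m) (adm b y) \<noteq> 0" and m2: "(adm b ^^ Suc m) (adm b y) = 0"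
      using exists_last[of "\<lambda>m. (adm b ^^ m) (adm b y) \<noteq> 0" "k + k"] by auto
    define w where "w = (adm b ^^ m) y"
    have aw: "adm b w = (adm b ^^ m) (adm b y)" by (simp add: w_def funpow_swap1)
    have aaw: "adm b (adm b w) = 0" using m2 aw by simp
    define z where "z = adm b w ** bi"
    have zb: "z ** b = adm b w" by (simp add: z_def matrix_mul_assoc[symmetric] bbi)
    have znz: "z \<noteq> 0" using zb aw m1 by auto
    have "adm b z = 0" unfolding z_def adm_right[OF cbib] aaw by simp
    then have bz: "b ** z = z ** b" by (simp add: adm_def)
    have bzb: "b ** z ** bi = z" by (simp add: bz matrix_mul_assoc[symmetric] bbi)
    have "b ** w = w ** b + adm b w" by (simp add: adm_def)
    then have bwb: "b ** w ** bi = w + z"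
      by (simp add: z_def mmult_add_right matrix_mul_assoc[symmetric] bbi)
    have sand_add: "b ** (X + r *\<^sub>R Y) ** bi = b ** X ** bi + r *\<^sub>R (b ** Y ** bi)" for X Y r
      by (simp add: matrix_add_ldistrib mmult_add_right scal_mid)
    have Bpow: "Bn n ** w ** Bi n = w + real n *\<^sub>R z" for n
    proof (induction n)
      case 0 show ?case by (simp add: Bn_def Bi_def)
    next
      case (Suc n)
      have e1: "Bi (Suc n) = Bi n ** bi" unfolding Bi_def by (rule mpow_Suc2)
      have e2: "Bn (Suc n) = b ** Bn n" unfolding Bn_def by simp
      have "Bn (Suc n) ** w ** Bi (Suc n) = b ** (Bn n ** w ** Bi n) ** bi"
        by (simp only: e1 e2 matrix_mul_assoc)
      also have "\<dots> = w + z + real n *\<^sub>R z" by (simp only: Suc sand_add bwb bzb)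
      finally show ?case by (simp add: algebra_simps)
    qed
    have wy: "wproj d 1 y = y" by (rule wproj_one[OF yD[symmetric] dpos])
    define f where "f j = A (nk j) ** (w + real (nk j) *\<^sub>R z) ** Ai (nk j)" for j
    have flim: "f \<longlonglongrightarrow> w"
      using Qlim[of m 1] unfolding F by (simp add: f_def[abs_def] Bpow wy w_def[symmetric])
    obtain K where K: "\<And>j. norm (f j) \<le> K"
      using convergent_imp_Bseq[of f] flim unfolding convergent_def Bseq_def by blast
    have bpos: "\<beta> > 0"
    proof -
      have "0 \<le> B" using Ba[of 0] norm_ge_zero order_trans by blast
      then have "\<beta> \<ge> 0" unfolding \<beta>_def by simp
      moreover have "\<beta> \<noteq> 0" using nb2[of z 0] znz by auto
      ultimately show ?thesis by simp
    qed
    have zpos: "norm z > 0" using znz by simp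
    obtain N :: nat where N: "(K * \<beta> + norm w) / norm z < real N" using reals_Archimedean2 by blast
    obtain j where j: "N \<le> nk j" using nk_large[OF nk] by blast
    have "real (nk j) * norm z - norm w \<le> norm (w + real (nk j) *\<^sub>R z)"
      using norm_triangle_ineq2[of "real (nk j) *\<^sub>R z" "- w"] by (simp add: algebra_simps)
    also have "\<dots> \<le> \<beta> * norm (f j)" unfolding f_def by (rule nb2)
    also have "\<dots> \<le> \<beta> * K" using K[of j] bpos by simp
    finally have "real (nk j) * norm z \<le> \<beta> * K + norm w" by simp
    moreover have "K * \<beta> + norm w < real N * norm z" using N zpos by (simp add: pos_divide_less_eq)
    moreover have "real N * norm z \<le> real (nk j) * norm z" using j zpos by simp
    ultimately show False by (simp add: mult.commute)
  qed
  show ?thesis using yD step2 by simp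
qed



lemma metric_lemma:
  fixes E :: "nat \<Rightarrow> 'a::real_normed_vector \<Rightarrow> 'a" and R :: "'a set" and \<phi> :: "'a \<Rightarrow> 'a"
  assumes E0: "\<And>x. E 0 x = x"
  and Eb: "\<And>n x y. norm (E n x - E n y) \<le> \<beta> * norm (x - y)"
  and ES: "\<And>n x. E n (E 1 x) = E (Suc n) x"
  and phi: "\<And>x. x \<in> R \<Longrightarrow> \<phi> x = E 1 x"
  and rec: "\<And>x y. \<exists>nk. filterlim nk at_top sequentially \<and> ((\<lambda>j. E (nk j) x - E (nk j) y) \<longlongrightarrow> x - y) sequentially"
  shows "\<exists>d. Metric_space R d \<and> Metric_space.mtopology R d = top_of_set R
           \<and> (\<forall>x\<in>R. \<forall>y\<in>R. d (\<phi> x) (\<phi> y) = d x y)"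
proof -
  define \<beta>' where "\<beta>' = max \<beta> 1"
  have b1: "\<beta>' \<ge> 1" unfolding \<beta>'_def by simp
  have Eb': "norm (E n x - E n y) \<le> \<beta>' * norm (x - y)" for n x y
    using Eb[of n x y] unfolding \<beta>'_def by (smt (verit) max.cobounded1 mult_right_mono norm_ge_zero)
  define d where "d x y = (SUP n. norm (E n x - E n y))" for x y
  have bdd: "bdd_above (range (\<lambda>n. norm (E n x - E n y)))" for x y
    using Eb' by (intro bdd_aboveI2) blast
  have upper: "norm (E n x - E n y) \<le> d x y" for n x y
    unfolding d_def by (rule cSUP_upper[OF UNIV_I bdd])
  have low: "norm (x - y) \<le> d x y" for x y using upper[of 0 x y] by (simp add: E0)
  have up: "d x y \<le> \<beta>' * norm (x - y)" for x y
    unfolding d_def by (rule cSUP_least) (auto intro: Eb')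
  have ms: "Metric_space R d"
  proof
    fix x y z
    show "0 \<le> d x y" using low[of x y] norm_ge_zero order_trans by blast
    show "d x y = d y x" unfolding d_def by (simp add: norm_minus_commute)
    show "d x y = 0 \<longleftrightarrow> x = y"
    proof
      assume "d x y = 0" then show "x = y" using low[of x y] by simp
    next
      assume "x = y" then show "d x y = 0" using up[of x y] low[of x y] by simp
    qed
    show "d x z \<le> d x y + d y z"
      unfolding d_def[of x z]
    proof (rule cSUP_least)
      fix n
      have "norm (E n x - E n z) \<le> norm (E n x - E n y) + norm (E n y - E n z)"
        by (rule norm_diff_triangle_le[of _ "E n y"]) simp_all
      also have "\<dots> \<le> d x y + d y z" by (intro add_mono upper)
      finally show "norm (E n x - E n z) \<le> d x y + d y z" .
    qed simp
  qed
  interpret M: Metric_space R d by (rule ms)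
  have top: "M.mtopology = top_of_set R"
  proof (rule topology_eq[THEN iffD2], intro allI iffI)
    fix S assume "openin M.mtopology S"
    then have S: "S \<subseteq> R" "\<And>x. x \<in> S \<Longrightarrow> \<exists>r>0. M.mball x r \<subseteq> S"
      unfolding M.openin_mtopology by auto
    show "openin (top_of_set R) S"
      unfolding openin_euclidean_subtopology_iff
    proof (intro conjI ballI S(1))
      fix x assume x: "x \<in> S"
      obtain r where r: "r > 0" "M.mball x r \<subseteq> S" using S(2)[OF x] by blast
      show "\<exists>e>0. \<forall>x'\<in>R. dist x' x < e \<longrightarrow> x' \<in> S"
      proof (intro exI[of _ "r / \<beta>'"] conjI ballI impI)
        show "r / \<beta>' > 0" using r b1 by simp
        fix x' assume x': "x' \<in> R" "dist x' x < r / \<beta>'"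
        have "d x x' \<le> \<beta>' * norm (x - x')" by (rule up)
        also have "\<dots> < r" using x'(2) b1 by (simp add: dist_norm norm_minus_commute field_simps)
        finally have "d x x' < r" .
        then have "x' \<in> M.mball x r" using x S(1) x'(1) by auto
        then show "x' \<in> S" using r(2) by blast
      qed
    qed
  next
    fix S assume "openin (top_of_set R) S"
    then have S: "S \<subseteq> R" "\<And>x. x \<in> S \<Longrightarrow> \<exists>e>0. \<forall>x'\<in>R. dist x' x < e \<longrightarrow> x' \<in> S"
      unfolding openin_euclidean_subtopology_iff by auto
    show "openin M.mtopology S"
      unfolding M.openin_mtopology
    proof (intro conjI allI impI S(1))
      fix x assume x: "x \<in> S"
      obtain e where e: "e > 0" "\<And>x'. x' \<in> R \<Longrightarrow> dist x' x < e \<Longrightarrow> x' \<in> S" using S(2)[OF x] by blast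
      show "\<exists>r>0. M.mball x r \<subseteq> S"
      proof (intro exI[of _ e] conjI subsetI)
        fix x' assume "x' \<in> M.mball x e"
        then have "x' \<in> R" "d x x' < e" by auto
        moreover have "dist x' x \<le> d x x'" using low[of x x'] by (simp add: dist_norm norm_minus_commute)
        ultimately show "x' \<in> S" using e by auto
      qed (fact e(1))
    qed
  qed
  have iso: "d (E 1 x) (E 1 y) = d x y" for x y
  proof -
    have dS: "d (E 1 x) (E 1 y) = (SUP n. norm (E (Suc n) x - E (Suc n) y))"
      unfolding d_def ES by (rule refl)
    have bddS: "bdd_above (range (\<lambda>n. norm (E (Suc n) x - E (Suc n) y)))"
      using Eb' by (intro bdd_aboveI2) blast
    have le1: "(SUP n. norm (E (Suc n) x - E (Suc n) y)) \<le> d x y"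
      by (rule cSUP_least) (simp, rule upper)
    have le2: "d x y \<le> (SUP n. norm (E (Suc n) x - E (Suc n) y))"
      unfolding d_def
    proof (rule cSUP_least)
      fix n
      show "norm (E n x - E n y) \<le> (SUP n. norm (E (Suc n) x - E (Suc n) y))"
      proof (cases n)
        case (Suc m)
        then show ?thesis using cSUP_upper[OF UNIV_I bddS, of m] by simp
      next
        case 0
        obtain nk where nk: "filterlim nk at_top sequentially"
          and lim: "((\<lambda>j. E (nk j) x - E (nk j) y) \<longlongrightarrow> x - y) sequentially"
          using rec by blast
        have "eventually (\<lambda>j. 1 \<le> nk j) sequentially" using nk unfolding filterlim_at_top by blast
        then obtain N where N: "\<And>j. j \<ge> N \<Longrightarrow> 1 \<le> nk j" unfolding eventually_sequentially by blast
        have "norm (x - y) \<le> (SUP n. norm (E (Suc n) x - E (Suc n) y))"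
        proof (rule LIMSEQ_le_const2[OF tendsto_norm[OF lim]], intro exI allI impI)
          fix j assume "j \<ge> N"
          then have "1 \<le> nk j" by (rule N)
          then have m: "nk j = Suc (nk j - 1)" by simp
          define m where "m = nk j - 1" 
          have m: "nk j = Suc m" using m m_def by simp
          show "norm (E (nk j) x - E (nk j) y) \<le> (SUP n. norm (E (Suc n) x - E (Suc n) y))"
            unfolding m using cSUP_upper[OF UNIV_I bddS, of m] by simp
        qed
        then show ?thesis using 0 by (simp add: E0)
      qed
    qed simp
    show ?thesis using dS le1 le2 by simp
  qed
  show ?thesis
  proof (intro exI[of _ d] conjI ms top ballI)
    fix x y assume "x \<in> R" "y \<in> R"
    then show "d (\<phi> x) (\<phi> y) = d x y" using phi iso by metis
  qed
qed



lemma cj: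
  fixes P Pi X Y :: "real^'n^'n"
  assumes "P ** Pi = mat 1"
  shows "(Pi ** X ** P) ** (Pi ** Y ** P) = Pi ** (X ** Y) ** P"
proof -
  have "(Pi ** X ** P) ** (Pi ** Y ** P) = Pi ** X ** (P ** Pi) ** Y ** P"
    by (simp only: matrix_mul_assoc)
  then show ?thesis by (simp add: assms matrix_mul_assoc)
qed

lemma cpow:
  fixes P Pi X :: "real^'n^'n"
  assumes "P ** Pi = mat 1" "Pi ** P = mat 1"
  shows "mpow (Pi ** X ** P) n = Pi ** mpow X n ** P"
proof (induction n)
  case 0 show ?case by (simp add: assms)
next
  case (Suc n)
  show ?case by (simp only: mpow.simps(2) Suc cj[OF assms(1)])
qed

lemma uncj:
  fixes P Pi X :: "real^'n^'n"
  assumes "P ** Pi = mat 1"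
  shows "P ** (Pi ** X ** P) ** Pi = X"
proof -
  have "P ** (Pi ** X ** P) ** Pi = (P ** Pi) ** X ** (P ** Pi)" by (simp only: matrix_mul_assoc)
  then show ?thesis by (simp add: assms)
qed

lemma mtend:
  fixes f :: "nat \<Rightarrow> real^'n^'n" and A C :: "real^'n^'n"
  assumes "(f \<longlongrightarrow> L) sequentially"
  shows "((\<lambda>j. A ** f j ** C) \<longlongrightarrow> A ** L ** C) sequentially"
proof -
  have "((\<lambda>j. A ** f j) \<longlongrightarrow> A ** L) sequentially"
    by (rule bounded_bilinear.tendsto[OF bb_mmult tendsto_const assms])
  then show ?thesis by (rule bounded_bilinear.tendsto[OF bb_mmult _ tendsto_const])
qed

lemma comm3:
  fixes A X Y Z :: "real^'n^'n"
  assumes "A ** X = X ** A" "A ** Y = Y ** A" "A ** Z = Z ** A"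
  shows "A ** (X ** Y ** Z) = (X ** Y ** Z) ** A"
proof -
  have "A ** (X ** Y ** Z) = (A ** X) ** Y ** Z" by (simp only: matrix_mul_assoc)
  also have "\<dots> = X ** (A ** Y) ** Z" by (simp only: assms(1) matrix_mul_assoc)
  also have "\<dots> = X ** Y ** (A ** Z)" by (simp only: assms(2) matrix_mul_assoc)
  also have "\<dots> = (X ** Y ** Z) ** A" by (simp only: assms(3) matrix_mul_assoc)
  finally show ?thesis .
qed

lemma mpow_one: "mpow (A::'a::semiring_1^'n^'n) 1 = A"
  by (simp only: One_nat_def mpow.simps matrix_mul_rid)

theorem lemma5p2:
  fixes G :: "(real^'n^'n) set" and g e h u :: "real^'n^'n"
  assumes "connected_semisimple_linear_group G"
    and "g \<in> G"
    and "elliptic e" and "hyperbolic h" and "unipotent u"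
    and "e ** h = h ** e" and "e ** u = u ** e" and "h ** u = u ** h"
    and "g = e ** h ** u"
  shows "recurrent_set (conj_map g) G = centralizer G h \<inter> centralizer G u
    \<and> (\<exists>d. Metric_space (recurrent_set (conj_map g) G) d
           \<and> Metric_space.mtopology (recurrent_set (conj_map g) G) d
               = top_of_set (recurrent_set (conj_map g) G)
           \<and> (\<forall>x\<in>recurrent_set (conj_map g) G. \<forall>y\<in>recurrent_set (conj_map g) G.
                 d (conj_map g x) (conj_map g y) = d x y))"
proof -
  have Ginv: "G \<subseteq> {A. invertible A}"
    using assms(1) by (simp add: connected_semisimple_linear_group_def matrix_subgroup_def)
  have ginv: "invertible g" using Ginv assms(2) by auto
  define gi where "gi = matrix_inv g"
  have gg: "g ** gi = mat 1" "gi ** g = mat 1" using matrix_inv_props[OF ginv] by (simp_all add: gi_def)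
  have "e ** (h ** u ** gi) = g ** gi" by (simp add: assms(9) matrix_mul_assoc)
  then have e_r: "e ** (h ** u ** gi) = mat 1" using gg by simp
  have einv: "invertible e" using e_r invertible_right_inverse by blast
  have "(gi ** e ** h) ** u = gi ** g" by (simp add: assms(9) matrix_mul_assoc)
  then have "(gi ** e ** h) ** u = mat 1" using gg by simp
  then have uinv: "invertible u" using invertible_left_inverse by blast
  define ei where "ei = matrix_inv e"
  define ui where "ui = matrix_inv u"
  have ee: "e ** ei = mat 1" "ei ** e = mat 1" using matrix_inv_props[OF einv] by (simp_all add: ei_def)
  have uu: "u ** ui = mat 1" "ui ** u = mat 1" using matrix_inv_props[OF uinv] by (simp_all add: ui_def)
  have iter: "(conj_map g ^^ n) x = mpow g n ** x ** mpow gi n" for n x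
  proof (induction n)
    case 0 show ?case by simp
  next
    case (Suc n)
    have e1: "mpow gi (Suc n) = mpow gi n ** gi" by (rule mpow_Suc2)
    have "(conj_map g ^^ Suc n) x = conj_map g ((conj_map g ^^ n) x)" by simp
    also have "\<dots> = g ** (mpow g n ** x ** mpow gi n) ** gi" unfolding Suc conj_map_def gi_def ..
    finally have "(conj_map g ^^ Suc n) x = g ** (mpow g n ** x ** mpow gi n) ** gi" .
    then show ?case unfolding e1 by (simp only: mpow.simps(2) matrix_mul_assoc)
  qed
  obtain B1 where B1: "\<And>n. norm (mpow e n) \<le> B1" using ell_bound[OF assms(3)] by blast
  obtain B2 where B2: "\<And>n. norm (mpow ei n) \<le> B2"
    using ell_bound[OF ell_inv[OF assms(3) einv]] by (auto simp: ei_def)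
  define Bm where "Bm = max B1 B2"
  have Bm1: "norm (mpow e n) \<le> Bm" for n using B1[of n] unfolding Bm_def by simp
  have Bm2: "norm (mpow ei n) \<le> Bm" for n using B2[of n] unfolding Bm_def by simp
  have sub: "recurrent_set (conj_map g) G \<subseteq> centralizer G h \<inter> centralizer G u"
  proof
    fix x assume "x \<in> recurrent_set (conj_map g) G"
    then obtain nk where xG: "x \<in> G" and nk: "filterlim nk at_top sequentially"
      and lim: "((\<lambda>k. (conj_map g ^^ nk k) x) \<longlongrightarrow> x) sequentially"
      unfolding recurrent_set_def by blast
    obtain P D :: "real^'n^'n" where Pinv: "invertible P" and Dd: "is_diag D"
      and Dpos: "\<And>i. D $ i $ i > 0" and hP: "h ** P = P ** D"
      using assms(4) unfolding hyperbolic_def by blast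
    define Pi where "Pi = matrix_inv P"
    have PP: "P ** Pi = mat 1" "Pi ** P = mat 1" using matrix_inv_props[OF Pinv] by (simp_all add: Pi_def)
    define d where "d i = D $ i $ i" for i
    have Ddg: "D = dg d" using Dd by (simp add: vec_eq_iff dg_entry d_def is_diag_def)
    have dpos: "\<forall>i. d i > 0" using Dpos by (simp add: d_def)
    have cj': "\<And>X Y. (Pi ** X ** P) ** (Pi ** Y ** P) = Pi ** (X ** Y) ** P" by (rule cj[OF PP(1)])
    have hD: "Pi ** h ** P = dg d"
    proof -
      have "Pi ** h ** P = Pi ** (h ** P)" by (simp add: matrix_mul_assoc)
      also have "\<dots> = D" by (simp add: hP matrix_mul_assoc PP)
      finally show ?thesis using Ddg by simp
    qed
    define a where "a = Pi ** e ** P"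
    define ai where "ai = Pi ** ei ** P"
    define b where "b = Pi ** u ** P"
    define bi where "bi = Pi ** ui ** P"
    define c where "c = Pi ** g ** P"
    define ci where "ci = Pi ** gi ** P"
    define y where "y = Pi ** x ** P"
    have PiP1: "Pi ** mat 1 ** P = mat 1" by (simp add: PP)
    have aai: "a ** ai = mat 1" "ai ** a = mat 1" unfolding a_def ai_def cj' ee PiP1 by simp_all
    have bbi: "b ** bi = mat 1" "bi ** b = mat 1" unfolding b_def bi_def cj' uu PiP1 by simp_all
    have cci: "ci ** c = mat 1" unfolding c_def ci_def cj' gg PiP1 by simp
    have cdef: "c = a ** dg d ** b" unfolding a_def b_def c_def hD[symmetric] cj' assms(9) by simp
    have cad: "a ** dg d = dg d ** a" unfolding a_def hD[symmetric] cj' assms(6) by simp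
    have cbd: "b ** dg d = dg d ** b" unfolding b_def hD[symmetric] cj' assms(8) by simp
    have cab: "a ** b = b ** a" unfolding a_def b_def cj' assms(7) by simp
    define B0 where "B0 = max (norm Pi) (norm P)"
    have B0pos: "0 \<le> B0" unfolding B0_def by (rule order_trans[OF norm_ge_zero max.cobounded2])
    define B where "B = (real CARD('n)^3 * real CARD('n)^3 * B0 * B0) * Bm"
    have Ba: "norm (mpow a n) \<le> B" for n
    proof -
      have "norm (mpow a n) \<le> (real CARD('n)^3 * real CARD('n)^3 * B0 * B0) * norm (mpow e n)"
        unfolding a_def cpow[OF PP] by (rule sandwich_bound) (simp_all add: B0_def)
      also have "\<dots> \<le> B" unfolding B_def by (intro mult_left_mono Bm1) (simp add: B0pos)
      finally show ?thesis .
    qed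
    have Bai: "norm (mpow ai n) \<le> B" for n
    proof -
      have "norm (mpow ai n) \<le> (real CARD('n)^3 * real CARD('n)^3 * B0 * B0) * norm (mpow ei n)"
        unfolding ai_def cpow[OF PP] by (rule sandwich_bound) (simp_all add: B0_def)
      also have "\<dots> \<le> B" unfolding B_def by (intro mult_left_mono Bm2) (simp add: B0pos)
      finally show ?thesis .
    qed
    obtain k where k: "mpow (u - mat 1) k = 0" using assms(5) unfolding unipotent_def by blast
    have bm1: "b - mat 1 = Pi ** (u - mat 1) ** P"
      by (simp add: b_def mmult_diff_left mmult_diff_right PP)
    have nil: "mpow (b - mat 1) k = 0" unfolding bm1 cpow[OF PP] k by simp
    have lim': "((\<lambda>j. mpow c (nk j) ** y ** mpow ci (nk j)) \<longlongrightarrow> y) sequentially"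
    proof -
      have "mpow c n ** y ** mpow ci n = Pi ** ((conj_map g ^^ n) x) ** P" for n
        unfolding c_def ci_def y_def cpow[OF PP] cj' iter ..
      then show ?thesis unfolding y_def using mtend[OF lim] by simp
    qed
    from core[OF dpos aai bbi cdef cci cad cbd cab Ba Bai nil nk lim']
    have r1: "dg d ** y = y ** dg d" and r2: "b ** y = y ** b" by auto
    have "Pi ** (h ** x) ** P = Pi ** (x ** h) ** P"
      using r1 unfolding y_def hD[symmetric] cj' .
    then have "P ** (Pi ** (h ** x) ** P) ** Pi = P ** (Pi ** (x ** h) ** P) ** Pi" by (rule arg_cong)
    then have hx: "h ** x = x ** h" by (simp only: uncj[OF PP(1)])
    have "Pi ** (u ** x) ** P = Pi ** (x ** u) ** P"
      using r2 unfolding y_def b_def cj' .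
    then have "P ** (Pi ** (u ** x) ** P) ** Pi = P ** (Pi ** (x ** u) ** P) ** Pi" by (rule arg_cong)
    then have ux: "u ** x = x ** u" by (simp only: uncj[OF PP(1)])
    show "x \<in> centralizer G h \<inter> centralizer G u"
      using xG hx ux by (simp add: centralizer_def)
  qed
  have hu_gi: "h ** u ** gi = ei"
  proof -
    have "ei ** (e ** (h ** u ** gi)) = ei" by (simp add: e_r)
    then show ?thesis by (simp add: matrix_mul_assoc ee)
  qed
  have eih: "h ** ei = ei ** h" using comm_inv[OF assms(6)[symmetric] ee] by simp
  have eiu: "u ** ei = ei ** u" using comm_inv[OF assms(7)[symmetric] ee] by simp
  have cstep: "conj_map g z = e ** z ** ei" if "h ** z = z ** h" "u ** z = z ** u" for z
  proof -
    have "conj_map g z = e ** (h ** (u ** z)) ** gi"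
      by (simp add: conj_map_def gi_def assms(9) matrix_mul_assoc)
    also have "h ** (u ** z) = h ** (z ** u)" using that(2) by simp
    also have "\<dots> = (h ** z) ** u" by (simp only: matrix_mul_assoc)
    also have "\<dots> = z ** h ** u" using that(1) by simp
    also have "e ** (z ** h ** u) ** gi = e ** z ** (h ** u ** gi)" by (simp only: matrix_mul_assoc)
    finally show ?thesis by (simp add: hu_gi)
  qed
  define E where "E n z = mpow e n ** z ** mpow ei n" for n z
  have Ecomm: "h ** E n z = E n z ** h \<and> u ** E n z = E n z ** u"
    if "h ** z = z ** h" "u ** z = z ** u" for n z
    unfolding E_def
    using comm3[OF mpow_comm[OF assms(6), symmetric] that(1) mpow_comm[OF eih[symmetric], symmetric]]
      comm3[OF mpow_comm[OF assms(7), symmetric] that(2) mpow_comm[OF eiu[symmetric], symmetric]]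
    by blast
  have ES: "E n (E 1 z) = E (Suc n) z" for n z
  proof -
    have e1: "mpow e (Suc n) = mpow e n ** e" by (rule mpow_Suc2)
    have e2: "mpow ei (Suc n) = ei ** mpow ei n" by simp
    show ?thesis unfolding E_def mpow_one e1 e2 by (simp only: matrix_mul_assoc)
  qed
  have iterE: "(conj_map g ^^ n) x = E n x" if "h ** x = x ** h" "u ** x = x ** u" for n x
  proof (induction n)
    case 0 show ?case by (simp add: E_def)
  next
    case (Suc n)
    have "(conj_map g ^^ Suc n) x = conj_map g (E n x)" using Suc by simp
    also have "\<dots> = E 1 (E n x)" unfolding E_def[of 1] mpow_one
      by (rule cstep) (use Ecomm[OF that] in auto)
    also have "\<dots> = E (Suc n) x"
    proof -
      have e2: "mpow ei (Suc n) = mpow ei n ** ei" by (rule mpow_Suc2)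
      show ?thesis unfolding E_def mpow_one e2 unfolding mpow.simps(2) by (simp only: matrix_mul_assoc)
    qed
    finally show ?case .
  qed
  obtain nk where nk: "filterlim nk at_top sequentially"
    and enk: "((\<lambda>k. mpow e (nk k)) \<longlongrightarrow> mat 1) sequentially"
    and einkt: "((\<lambda>k. mpow ei (nk k)) \<longlongrightarrow> mat 1) sequentially"
    using ell_recur[OF assms(3) einv] unfolding ei_def by blast
  have Elim: "((\<lambda>j. E (nk j) z) \<longlongrightarrow> z) sequentially" for z
  proof -
    have "((\<lambda>j. mpow e (nk j) ** z) \<longlongrightarrow> mat 1 ** z) sequentially"
      by (rule bounded_bilinear.tendsto[OF bb_mmult enk tendsto_const])
    then have "((\<lambda>j. mpow e (nk j) ** z ** mpow ei (nk j)) \<longlongrightarrow> mat 1 ** z ** mat 1) sequentially"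
      by (rule bounded_bilinear.tendsto[OF bb_mmult _ einkt])
    then show ?thesis by (simp add: E_def)
  qed
  have sup: "centralizer G h \<inter> centralizer G u \<subseteq> recurrent_set (conj_map g) G"
  proof
    fix x assume "x \<in> centralizer G h \<inter> centralizer G u"
    then have xG: "x \<in> G" and hx: "h ** x = x ** h" and ux: "u ** x = x ** u"
      by (auto simp: centralizer_def)
    show "x \<in> recurrent_set (conj_map g) G"
      unfolding recurrent_set_def using xG nk Elim[of x] iterE[OF hx ux] by auto
  qed
  have R: "recurrent_set (conj_map g) G = centralizer G h \<inter> centralizer G u"
    using sub sup by blast
  have Ediff: "E n x - E n y = E n (x - y)" for n x y
    by (simp add: E_def mmult_diff_left mmult_diff_right)
  have met: "\<exists>d. Metric_space (centralizer G h \<inter> centralizer G u) d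
      \<and> Metric_space.mtopology (centralizer G h \<inter> centralizer G u) d = top_of_set (centralizer G h \<inter> centralizer G u)
      \<and> (\<forall>x\<in>centralizer G h \<inter> centralizer G u. \<forall>y\<in>centralizer G h \<inter> centralizer G u.
            d (conj_map g x) (conj_map g y) = d x y)"
  proof (rule metric_lemma[where E = E])
    show "E 0 x = x" for x by (simp add: E_def)
    show "norm (E n x - E n y) \<le> (real CARD('n)^3 * real CARD('n)^3 * Bm * Bm) * norm (x - y)" for n x y
      unfolding Ediff unfolding E_def by (rule sandwich_bound[OF Bm1 Bm2])
    show "E n (E 1 x) = E (Suc n) x" for n x by (rule ES)
    show "conj_map g x = E 1 x" if "x \<in> centralizer G h \<inter> centralizer G u" for x
      using that cstep by (auto simp: centralizer_def E_def mpow_one)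
    show "\<exists>nk. filterlim nk at_top sequentially \<and> ((\<lambda>j. E (nk j) x - E (nk j) y) \<longlongrightarrow> x - y) sequentially" for x y
      using nk Elim[of "x - y"] by (auto simp: Ediff)
  qed
  show ?thesis unfolding R using met by blast
qed

end
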